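(* Let $G$ be a nilpotent $p$-group ($p$ prime) whose first Ulm factor $G/G_0$ has bounded period. Then $G_0$ is divisible.
   Context: For a nilpotent $p$-group $G$, the height of $g\in G$ is the greatest $n$ with $g=h^{p^n}$ for some $h\in G$; if no greatest such $n$ exists, $g$ has infinite height. $G_0$ is the (normal) subgroup of elements of infinite height, and $G/G_0$ is the first Ulm factor. Bounded period means there is $n\ge1$ with $x^n=1$ for all elements $x$. Divisible means every element has an $n$-th root in the group for every $n\ge1$. *)

theory Defs
  imports "HOL-Algebra.Algebra"
begin

definition lcs_step :: "('a, 'b) monoid_scheme \<Rightarrow> 'a set \<Rightarrow> 'a set" where
  "lcs_step G H = generate G
     {x \<otimes>\<^bsub>G\<^esub> y \<otimes>\<^bsub>G\<^esub> inv\<^bsub>G\<^esub> x \<otimes>\<^bsub>G\<^esub> inv\<^bsub>G\<^esub> y | x y. x \<in> H \<and> y \<in> carrier G}"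

definition nilpotent_group :: "('a, 'b) monoid_scheme \<Rightarrow> bool" where
  "nilpotent_group G \<longleftrightarrow> group G \<and> (\<exists>n. (lcs_step G ^^ n) (carrier G) = {\<one>\<^bsub>G\<^esub>})"

definition p_group :: "('a, 'b) monoid_scheme \<Rightarrow> nat \<Rightarrow> bool" where
  "p_group G p \<longleftrightarrow> group G \<and> (\<forall>g\<in>carrier G. \<exists>k::nat. g [^]\<^bsub>G\<^esub> (p ^ k) = \<one>\<^bsub>G\<^esub>)"

definition has_root_pow :: "('a, 'b) monoid_scheme \<Rightarrow> nat \<Rightarrow> 'a \<Rightarrow> nat \<Rightarrow> bool" where
  "has_root_pow G p g n \<longleftrightarrow> (\<exists>h\<in>carrier G. g = h [^]\<^bsub>G\<^esub> (p ^ n))"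

definition infinite_height :: "('a, 'b) monoid_scheme \<Rightarrow> nat \<Rightarrow> 'a \<Rightarrow> bool" where
  "infinite_height G p g \<longleftrightarrow>
     \<not> (\<exists>n. has_root_pow G p g n \<and> (\<forall>m. has_root_pow G p g m \<longrightarrow> m \<le> n))"

definition G0 :: "('a, 'b) monoid_scheme \<Rightarrow> nat \<Rightarrow> 'a set" where
  "G0 G p = {g \<in> carrier G. infinite_height G p g}"

definition bounded_period :: "('c, 'd) monoid_scheme \<Rightarrow> bool" where
  "bounded_period H \<longleftrightarrow> (\<exists>n::nat. n \<ge> 1 \<and> (\<forall>x\<in>carrier H. x [^]\<^bsub>H\<^esub> n = \<one>\<^bsub>H\<^esub>))"

definition divisible_group :: "('c, 'd) monoid_scheme \<Rightarrow> bool" where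
  "divisible_group H \<longleftrightarrow>
     (\<forall>x\<in>carrier H. \<forall>n::nat. n \<ge> 1 \<longrightarrow> (\<exists>y\<in>carrier H. y [^]\<^bsub>H\<^esub> n = x))"

end

theory Submission
  imports Defs
begin

lemma pow_mod_ord:
  fixes G (structure)
  assumes "group G" "h \<in> carrier G" "h [^]\<^bsub>G\<^esub> (q::nat) = \<one>\<^bsub>G\<^esub>"
  shows "h [^]\<^bsub>G\<^esub> (k::nat) = h [^]\<^bsub>G\<^esub> (k mod q)"
proof -
  interpret group G by fact
  have "k = q * (k div q) + k mod q" by simp
  then have "h [^] k = (h [^] q) [^] (k div q) \<otimes> h [^] (k mod q)"
    by (metis assms(2) nat_pow_mult nat_pow_pow)
  also have "\<dots> = h [^] (k mod q)" using assms by simp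
  finally show ?thesis .
qed

lemma root_down:
  fixes G (structure)
  assumes "group G" "has_root_pow G p g m" "n \<le> m"
  shows "has_root_pow G p g n"
proof -
  interpret group G by fact
  obtain h where h: "h \<in> carrier G" "g = h [^] (p ^ m)" using assms(2) unfolding has_root_pow_def by blast
  have "p ^ m = p ^ (m - n) * p ^ n" using assms(3) by (metis le_add_diff_inverse2 power_add)
  then have "g = (h [^] (p ^ (m - n))) [^] (p ^ n)" using h by (simp add: nat_pow_pow)
  then show ?thesis unfolding has_root_pow_def using h by blast
qed

lemma inf_height_iff:
  fixes G (structure)
  assumes "group G" "g \<in> carrier G"
  shows "infinite_height G p g \<longleftrightarrow> (\<forall>n. has_root_pow G p g n)"
proof
  assume A: "infinite_height G p g"
  show "\<forall>n. has_root_pow G p g n"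
  proof (rule ccontr)
    assume "\<not> (\<forall>n. has_root_pow G p g n)"
    then obtain n where n: "\<not> has_root_pow G p g n" by blast
    have less: "m < n" if "has_root_pow G p g m" for m
      using root_down[OF assms(1) that, of n] n by force
    let ?S = "{m. has_root_pow G p g m}"
    have fin: "finite ?S" using less by (metis bounded_nat_set_is_finite mem_Collect_eq)
    have "has_root_pow G p g 0" unfolding has_root_pow_def
      using assms by (intro bexI[of _ g]) (auto simp: group.is_monoid monoid.nat_pow_Suc2)
    then have ne: "?S \<noteq> {}" by blast
    have "has_root_pow G p g (Max ?S) \<and> (\<forall>m. has_root_pow G p g m \<longrightarrow> m \<le> Max ?S)"
      using Max_in[OF fin ne] Max_ge[OF fin] by auto
    then show False using A unfolding infinite_height_def by blast
  qed
next
  assume "\<forall>n. has_root_pow G p g n"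
  then show "infinite_height G p g" unfolding infinite_height_def
    by (metis Suc_n_not_le_n)
qed

lemma G0_pow:
  fixes G (structure)
  assumes "group G" "g \<in> G0 G p"
  shows "g [^]\<^bsub>G\<^esub> (k::nat) \<in> G0 G p"
proof -
  interpret group G by fact
  have g: "g \<in> carrier G" "\<forall>n. has_root_pow G p g n"
    using assms inf_height_iff[OF assms(1)] unfolding G0_def by auto
  have "has_root_pow G p (g [^] k) n" for n
  proof -
    obtain h where h: "h \<in> carrier G" "g = h [^] (p ^ n)" using g(2) unfolding has_root_pow_def by blast
    have "g [^] k = (h [^] k) [^] (p ^ n)" using h by (simp add: nat_pow_pow mult.commute)
    then show ?thesis unfolding has_root_pow_def using h by blast
  qed
  then show ?thesis using inf_height_iff[OF assms(1)] g(1) unfolding G0_def by auto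
qed

lemma one_G0:
  fixes G (structure)
  assumes "group G"
  shows "\<one>\<^bsub>G\<^esub> \<in> G0 G p"
proof -
  interpret group G by fact
  have "has_root_pow G p \<one> n" for n unfolding has_root_pow_def by (intro bexI[of _ \<one>]) auto
  then show ?thesis using inf_height_iff[OF assms] unfolding G0_def by auto
qed

lemma pow_in_Mod:
  fixes G (structure)
  assumes "group G" "\<one>\<^bsub>G\<^esub> \<in> H" "h \<in> carrier G"
  shows "h [^]\<^bsub>G\<^esub> (k::nat) \<in> (H #>\<^bsub>G\<^esub> h) [^]\<^bsub>(G Mod H)\<^esub> k"
proof (induction k)
  case 0
  then show ?case using assms by (simp add: FactGroup_def)
next
  case (Suc k)
  interpret group G by fact
  have "h \<in> H #> h" using assms unfolding r_coset_def by force
  then have "h [^] k \<otimes> h \<in> ((H #> h) [^]\<^bsub>(G Mod H)\<^esub> k) <#> (H #> h)"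
    using Suc unfolding set_mult_def by blast
  then show ?case by (simp add: FactGroup_def)
qed

theorem lemma2:
  fixes G :: "('a, 'b) monoid_scheme" and p :: nat
  assumes "Factorial_Ring.prime p"
    and "nilpotent_group G"
    and "p_group G p"
    and "bounded_period (G Mod (G0 G p))"
  shows "divisible_group (G\<lparr>carrier := G0 G p\<rparr>)"
proof -
  have grp: "group G" using assms(2) unfolding nilpotent_group_def by blast
  from assms(4) obtain n0 :: nat where n0: "n0 \<ge> 1"
     "\<forall>Y\<in>carrier (G Mod (G0 G p)). pow (G Mod (G0 G p)) Y n0 = \<one>\<^bsub>G Mod (G0 G p)\<^esub>"
    unfolding bounded_period_def by blast
  have one: "\<one>\<^bsub>G Mod (G0 G p)\<^esub> = G0 G p" by (simp add: FactGroup_def)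
  have hn0: "h [^]\<^bsub>G\<^esub> n0 \<in> G0 G p" if h: "h \<in> carrier G" for h
  proof -
    have "G0 G p #>\<^bsub>G\<^esub> h \<in> rcosets\<^bsub>G\<^esub> (G0 G p)"
      unfolding RCOSETS_def using h by blast
    then have "G0 G p #>\<^bsub>G\<^esub> h \<in> carrier (G Mod (G0 G p))"
      by (simp add: FactGroup_def)
    then have "pow (G Mod (G0 G p)) (G0 G p #>\<^bsub>G\<^esub> h) n0 = G0 G p" using n0(2) one by simp
    moreover have "h [^]\<^bsub>G\<^esub> n0 \<in> pow (G Mod (G0 G p)) (G0 G p #>\<^bsub>G\<^esub> h) n0"
      by (rule pow_in_Mod[OF grp one_G0[OF grp] h])
    ultimately show ?thesis by simp
  qed
  interpret group G by (rule grp)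
  show ?thesis unfolding divisible_group_def
  proof (intro ballI allI impI)
    fix x and n :: nat
    assume x: "x \<in> carrier (G\<lparr>carrier := G0 G p\<rparr>)" and n: "1 \<le> n"
    then have xG0: "x \<in> G0 G p" by simp
    then have xG1: "x \<in> carrier G" unfolding G0_def by blast
    have xG: "\<forall>k. has_root_pow G p x k"
      using inf_height_iff[OF grp xG1] xG0 unfolding G0_def by blast
    define N where "N = n0 * n"
    have N0: "N \<noteq> 0" unfolding N_def using n n0(1) by simp
    define f where "f = multiplicity p N"
    obtain m where m: "N = p ^ f * m" "\<not> p dvd m" unfolding f_def
    proof (rule multiplicity_decompose')
      show "N \<noteq> 0" by (rule N0)
      show "\<not> is_unit p" using assms(1) not_prime_unit by blast
    qed
    have cop: "coprime m p" using prime_imp_coprime[OF assms(1) m(2)] by (simp add: coprime_commute)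
    obtain h where h: "h \<in> carrier G" "x = h [^]\<^bsub>G\<^esub> (p ^ f)" using xG unfolding has_root_pow_def by blast
    obtain a where a: "h [^]\<^bsub>G\<^esub> (p ^ a) = \<one>\<^bsub>G\<^esub>" using assms(3) h(1) unfolding p_group_def by blast
    have copa: "coprime m (p ^ a)" using cop by simp
    have m0: "m \<noteq> 0" using m(1) N0 by auto
    then obtain m' yy where "m * m' = p ^ a * yy + gcd m (p ^ a)" using bezout_nat by blast
    then have mm: "m * m' = p ^ a * yy + 1" using copa by simp
    have mm2: "m * m' = 1 + p ^ a * yy" using mm by simp
    have aux: "(1 + p ^ a * yy) mod p ^ a = 1 mod (p ^ a :: nat)" by (rule mod_mult_self2)
    have m': "(m * m') mod p ^ a = Suc 0 mod p ^ a" unfolding mm2 using aux by (simp only: One_nat_def)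
    have hmm: "h [^]\<^bsub>G\<^esub> (m * m') = h"
    proof -
      have "h [^]\<^bsub>G\<^esub> (m * m') = h [^]\<^bsub>G\<^esub> ((m * m') mod p ^ a)" by (rule pow_mod_ord[OF grp h(1) a])
      also have "\<dots> = h [^]\<^bsub>G\<^esub> (Suc 0 mod p ^ a)" using m' by simp
      also have "\<dots> = h [^]\<^bsub>G\<^esub> (Suc 0)" by (rule pow_mod_ord[OF grp h(1) a, symmetric])
      finally show ?thesis using h(1) by simp
    qed
    define y where "y = (h [^]\<^bsub>G\<^esub> n0) [^]\<^bsub>G\<^esub> m'"
    have yG0: "y \<in> G0 G p" unfolding y_def using G0_pow[OF grp hn0[OF h(1)]] by blast
    have "n0 * m' * n = N * m'" unfolding N_def by (simp add: ac_simps)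
    also have "\<dots> = (m * m') * p ^ f" unfolding m(1) by (simp add: ac_simps)
    finally have e1: "n0 * m' * n = (m * m') * p ^ f" .
    have "y [^]\<^bsub>G\<^esub> n = h [^]\<^bsub>G\<^esub> (n0 * m' * n)" unfolding y_def using h(1)
      by (simp add: nat_pow_pow)
    also have "\<dots> = (h [^]\<^bsub>G\<^esub> (m * m')) [^]\<^bsub>G\<^esub> (p ^ f)" unfolding e1 using h(1)
      by (simp add: nat_pow_pow)
    also have "\<dots> = x" using hmm h by simp
    finally have yx: "y [^]\<^bsub>G\<^esub> n = x" .
    have "y [^]\<^bsub>G\<lparr>carrier := G0 G p\<rparr>\<^esub> n = x" using yx nat_pow_consistent[of y n "G0 G p"] by simp
    then show "\<exists>y\<in>carrier (G\<lparr>carrier := G0 G p\<rparr>). y [^]\<^bsub>G\<lparr>carrier := G0 G p\<rparr>\<^esub> n = x"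
      using yG0 by auto
  qed
qed

end
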